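(* If $\Sigma$ is a finite inductive signature, then $\mathcal{J}(\Sigma)=\mathcal{J}^*(\Sigma)$.
   Context: Fix an infinite set $V$ of variables with decidable equality, and a fresh variable provider: functions $\varphi,\mathsf{fr}$ assigning to each finite $X\subseteq V$ an inhabited subset $\varphi(X)\subseteq V\setminus X$ and an element $\mathsf{fr}(X)\in\varphi(X)$. Fix disjoint sets $F$ (function symbols) and $T$ (type symbols) with decidable equality. Preelements are terms built from variables and symbols of $F$; a pretype is $S(t_1,\ldots,t_n)$ with $S\in T$ and $t_i$ preelements. $\mathrm{V}(E)$ is the set of variables of an expression $E$, $\equiv$ is syntactic identity, and $E[\bar a/\bar x]$ is simultaneous substitution. A precontext is a sequence $\Gamma=x_1:A_1,\ldots,x_n:A_n$ of pretypes with $x_k\in\varphi(\{x_1,\ldots,x_{k-1}\})$ and $\mathrm{V}(A_k)\subseteq\{x_1,\ldots,x_{k-1}\}$; $\mathrm{OV}(\Gamma)=x_1,\ldots,x_n$, $\mathrm{V}(\Gamma)=\{x_1,\ldots,x_n\}$, $\mathrm{Fresh}(\Gamma)=\varphi(\mathrm{V}(\Gamma))$, $\mathrm{fresh}(\Gamma)=\mathsf{fr}(\mathrm{V}(\Gamma))$, $E[\bar a/\Gamma]=E[\bar a/x_1,\ldots,x_n]$. Top variables: $\mathrm{TV}(\langle\rangle)=\emptyset$, $\mathrm{TV}(\Gamma,x:A)=(\mathrm{TV}(\Gamma)\setminus\mathrm{V}(A))\cup\{x\}$. A determining sequence for $\Gamma$ is a strictly increasing $\bar i=i_1,\ldots,i_k$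 in $\{1,\ldots,n\}$ with $\mathrm{TV}(\Gamma)\subseteq\{x_{i_1},\ldots,x_{i_k}\}$; for $\bar a=a_1,\ldots,a_n$ put $\bar a_{\bar i}=a_{i_1},\ldots,a_{i_k}$. A type predeclaration is $(\Gamma,S,\bar i)$ with $S\in T$, $\bar i$ determining; a function predeclaration is $(\Gamma,f,\bar i,U)$ with $f\in F$, $\bar i$ determining, $U$ a pretype with $\mathrm{V}(U)\subseteq\mathrm{V}(\Gamma)$. A presignature is a set $\Sigma$ of predeclarations with no symbol declared twice. Judgements are "$\Gamma$ context", "$A$ type $(\Gamma)$", "$a:A\ (\Gamma)$". $\mathcal{J}(\Sigma)$ is the smallest set of judgements closed under: (R1) $\langle\rangle$ context; (R2) from $\Gamma$ context and $A$ type $(\Gamma)$ infer $\Gamma,x:A$ context, for $x\in\mathrm{Fresh}(\Gamma)$; (R3) from $x_1:A_1,\ldots,x_n:A_n$ context infer $x_i:A_i\ (x_1:A_1,\ldots,x_n:A_n)$; (R4) if $(\Gamma,S,\bar i)\in\Sigma$ and $\bar a:\Delta\to\Gamma$, infer $S(\bar a_{\bar i})$ type $(\Delta)$; (R5) if $(\Gamma,f,\bar i,U)\in\Sigma$, $\bar a:\Delta\to\Gamma$ and $U[\bar a/\Gamma]$ type $(\Delta)$, infer $f(\bar a_{\bar i}):U[\bar a/\Gamma]\ (\Delta)$. Here, for $\Gamma=x_1:A_1,\ldots,x_n:A_n$, the context map "$\bar a:\Delta\to\Gamma$" abbreviates the $n+2$ judgements $\Delta$ context, $\Gamma$ context, and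 $a_k:A_k[a_1,\ldots,a_{k-1}/x_1,\ldots,x_{k-1}]\ (\Delta)$ for $k=1,\ldots,n$. $\Sigma$ is a signature if ($\Gamma$ context)$\in\mathcal{J}(\Sigma)$ whenever $(\Gamma,S,\bar i)\in\Sigma$, and ($U$ type $(\Gamma)$)$\in\mathcal{J}(\Sigma)$ whenever $(\Gamma,f,\bar i,U)\in\Sigma$. $\mathcal{J}^*(\Sigma)$ is defined exactly like $\mathcal{J}(\Sigma)$ except that (R5) is replaced by (R5* ): if $(\Gamma,f,\bar i,U)\in\Sigma$ and $\bar a:\Delta\to\Gamma$ (with the context-map judgements now read in $\mathcal{J}^*(\Sigma)$), infer $f(\bar a_{\bar i}):U[\bar a/\Gamma]\ (\Delta)$ (no premiss that $U[\bar a/\Gamma]$ is a type). A signature is inductive if it is obtained from the empty signature by finitely many steps, each adding either a type predeclaration $(\Gamma,S,\bar i)$ with $S$ not yet declared and ($\Gamma$ context)$\in\mathcal{J}$ of the current signature, or a function predeclaration $(\Gamma,f,\bar i,U)$ with $f$ not yet declared and ($U$ type $(\Gamma)$)$\in\mathcal{J}$ of the current signature. *)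

theory Defs
  imports Main
begin

text \<open>Variables: type 'v; function symbols: type 'f; type symbols: type 't.
  F and T are disjoint since they are distinct types; equality is decidable in HOL.\<close>

datatype ('v,'f) pelem = Var 'v | App 'f "('v,'f) pelem list"

datatype ('v,'f,'t) ptype = Ty 't "('v,'f) pelem list"

type_synonym ('v,'f,'t) pctx = "('v \<times> ('v,'f,'t) ptype) list"

fun varsE :: "('v,'f) pelem \<Rightarrow> 'v set" where
  "varsE (Var x) = {x}"
| "varsE (App f ts) = (\<Union>t\<in>set ts. varsE t)"

fun varsT :: "('v,'f,'t) ptype \<Rightarrow> 'v set" where
  "varsT (Ty S ts) = (\<Union>t\<in>set ts. varsE t)"

fun substE :: "('v \<Rightarrow> ('v,'f) pelem) \<Rightarrow> ('v,'f) pelem \<Rightarrow> ('v,'f) pelem" where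
  "substE \<sigma> (Var x) = \<sigma> x"
| "substE \<sigma> (App f ts) = App f (map (substE \<sigma>) ts)"

fun substT :: "('v \<Rightarrow> ('v,'f) pelem) \<Rightarrow> ('v,'f,'t) ptype \<Rightarrow> ('v,'f,'t) ptype" where
  "substT \<sigma> (Ty S ts) = Ty S (map (substE \<sigma>) ts)"

definition sub :: "('v,'f) pelem list \<Rightarrow> 'v list \<Rightarrow> 'v \<Rightarrow> ('v,'f) pelem" where
  "sub as xs y = (case map_of (zip xs as) y of Some a \<Rightarrow> a | None \<Rightarrow> Var y)"

definition OV :: "('v,'f,'t) pctx \<Rightarrow> 'v list" where
  "OV \<Gamma> = map fst \<Gamma>"

definition VC :: "('v,'f,'t) pctx \<Rightarrow> 'v set" where
  "VC \<Gamma> = set (OV \<Gamma>)"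

definition substCtxT :: "('v,'f,'t) ptype \<Rightarrow> ('v,'f) pelem list \<Rightarrow> ('v,'f,'t) pctx \<Rightarrow> ('v,'f,'t) ptype" where
  "substCtxT U as \<Gamma> = substT (sub as (OV \<Gamma>)) U"

definition fresh_provider :: "('v set \<Rightarrow> 'v set) \<Rightarrow> ('v set \<Rightarrow> 'v) \<Rightarrow> bool" where
  "fresh_provider \<phi> fr \<longleftrightarrow>
     (\<forall>X. finite X \<longrightarrow> \<phi> X \<subseteq> - X \<and> \<phi> X \<noteq> {} \<and> fr X \<in> \<phi> X)"

definition precontext :: "('v set \<Rightarrow> 'v set) \<Rightarrow> ('v,'f,'t) pctx \<Rightarrow> bool" where
  "precontext \<phi> \<Gamma> \<longleftrightarrow>
     (\<forall>k < length \<Gamma>. fst (\<Gamma>!k) \<in> \<phi> (set (map fst (take k \<Gamma>)))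
                     \<and> varsT (snd (\<Gamma>!k)) \<subseteq> set (map fst (take k \<Gamma>)))"

definition TV :: "('v,'f,'t) pctx \<Rightarrow> 'v set" where
  "TV \<Gamma> = foldl (\<lambda>S (x,A). (S - varsT A) \<union> {x}) {} \<Gamma>"

text \<open>Determining sequences, with 1-based indices i_1 < ... < i_k in {1..n}.\<close>
definition determining :: "('v,'f,'t) pctx \<Rightarrow> nat list \<Rightarrow> bool" where
  "determining \<Gamma> is \<longleftrightarrow> sorted_wrt (<) is \<and> set is \<subseteq> {1..length \<Gamma>}
     \<and> TV \<Gamma> \<subseteq> {fst (\<Gamma>!(i-1)) | i. i \<in> set is}"

definition select :: "'a list \<Rightarrow> nat list \<Rightarrow> 'a list" where
  "select as is = map (\<lambda>i. as!(i-1)) is"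

datatype ('v,'f,'t) decl =
    TDecl "('v,'f,'t) pctx" 't "nat list"
  | FDecl "('v,'f,'t) pctx" 'f "nat list" "('v,'f,'t) ptype"

fun predecl :: "('v set \<Rightarrow> 'v set) \<Rightarrow> ('v,'f,'t) decl \<Rightarrow> bool" where
  "predecl \<phi> (TDecl \<Gamma> S is) \<longleftrightarrow> precontext \<phi> \<Gamma> \<and> determining \<Gamma> is"
| "predecl \<phi> (FDecl \<Gamma> f is U) \<longleftrightarrow> precontext \<phi> \<Gamma> \<and> determining \<Gamma> is \<and> varsT U \<subseteq> VC \<Gamma>"

definition tsym_declared :: "('v,'f,'t) decl set \<Rightarrow> 't \<Rightarrow> bool" where
  "tsym_declared \<Sigma> S \<longleftrightarrow> (\<exists>\<Gamma> is. TDecl \<Gamma> S is \<in> \<Sigma>)"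

definition fsym_declared :: "('v,'f,'t) decl set \<Rightarrow> 'f \<Rightarrow> bool" where
  "fsym_declared \<Sigma> f \<longleftrightarrow> (\<exists>\<Gamma> is U. FDecl \<Gamma> f is U \<in> \<Sigma>)"

datatype ('v,'f,'t) judgement =
    IsCtx "('v,'f,'t) pctx"
  | IsType "('v,'f,'t) pctx" "('v,'f,'t) ptype"
  | HasType "('v,'f,'t) pctx" "('v,'f) pelem" "('v,'f,'t) ptype"

text \<open>Generic derivation system: with strict = True it is J(Sigma) (rule R5 with the premiss
  that U[a/Gamma] is a type), with strict = False it is J*(Sigma) (rule R5* without it).
  The context map "as : Delta -> Gamma" is written out inline in R4 and R5.\<close>
inductive_set Jgen :: "bool \<Rightarrow> ('v set \<Rightarrow> 'v set) \<Rightarrow> ('v,'f,'t) decl set \<Rightarrow> ('v,'f,'t) judgement set"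
  for strict :: bool and \<phi> :: "'v set \<Rightarrow> 'v set" and \<Sigma> :: "('v,'f,'t) decl set" where
  R1: "IsCtx [] \<in> Jgen strict \<phi> \<Sigma>"
| R2: "\<lbrakk> IsCtx \<Gamma> \<in> Jgen strict \<phi> \<Sigma>; IsType \<Gamma> A \<in> Jgen strict \<phi> \<Sigma>; x \<in> \<phi> (VC \<Gamma>) \<rbrakk>
       \<Longrightarrow> IsCtx (\<Gamma> @ [(x, A)]) \<in> Jgen strict \<phi> \<Sigma>"
| R3: "\<lbrakk> IsCtx \<Gamma> \<in> Jgen strict \<phi> \<Sigma>; i < length \<Gamma> \<rbrakk>
       \<Longrightarrow> HasType \<Gamma> (Var (fst (\<Gamma>!i))) (snd (\<Gamma>!i)) \<in> Jgen strict \<phi> \<Sigma>"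
| R4: "\<lbrakk> TDecl \<Gamma> S is \<in> \<Sigma>;
         IsCtx \<Delta> \<in> Jgen strict \<phi> \<Sigma>; IsCtx \<Gamma> \<in> Jgen strict \<phi> \<Sigma>; length as = length \<Gamma>;
         \<forall>k < length \<Gamma>. HasType \<Delta> (as!k)
             (substT (sub (take k as) (take k (OV \<Gamma>))) (snd (\<Gamma>!k))) \<in> Jgen strict \<phi> \<Sigma> \<rbrakk>
       \<Longrightarrow> IsType \<Delta> (Ty S (select as is)) \<in> Jgen strict \<phi> \<Sigma>"
| R5: "\<lbrakk> FDecl \<Gamma> f is U \<in> \<Sigma>;
         IsCtx \<Delta> \<in> Jgen strict \<phi> \<Sigma>; IsCtx \<Gamma> \<in> Jgen strict \<phi> \<Sigma>; length as = length \<Gamma>;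
         \<forall>k < length \<Gamma>. HasType \<Delta> (as!k)
             (substT (sub (take k as) (take k (OV \<Gamma>))) (snd (\<Gamma>!k))) \<in> Jgen strict \<phi> \<Sigma>;
         strict \<longrightarrow> IsType \<Delta> (substCtxT U as \<Gamma>) \<in> Jgen strict \<phi> \<Sigma> \<rbrakk>
       \<Longrightarrow> HasType \<Delta> (App f (select as is)) (substCtxT U as \<Gamma>) \<in> Jgen strict \<phi> \<Sigma>"

definition J :: "('v set \<Rightarrow> 'v set) \<Rightarrow> ('v,'f,'t) decl set \<Rightarrow> ('v,'f,'t) judgement set" where
  "J \<phi> \<Sigma> = Jgen True \<phi> \<Sigma>"

definition Jstar :: "('v set \<Rightarrow> 'v set) \<Rightarrow> ('v,'f,'t) decl set \<Rightarrow> ('v,'f,'t) judgement set" where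
  "Jstar \<phi> \<Sigma> = Jgen False \<phi> \<Sigma>"

inductive inductive_sig :: "('v set \<Rightarrow> 'v set) \<Rightarrow> ('v,'f,'t) decl set \<Rightarrow> bool"
  for \<phi> :: "'v set \<Rightarrow> 'v set" where
  empty: "inductive_sig \<phi> {}"
| addT: "\<lbrakk> inductive_sig \<phi> \<Sigma>; predecl \<phi> (TDecl \<Gamma> S is); \<not> tsym_declared \<Sigma> S;
          IsCtx \<Gamma> \<in> J \<phi> \<Sigma> \<rbrakk> \<Longrightarrow> inductive_sig \<phi> (insert (TDecl \<Gamma> S is) \<Sigma>)"
| addF: "\<lbrakk> inductive_sig \<phi> \<Sigma>; predecl \<phi> (FDecl \<Gamma> f is U); \<not> fsym_declared \<Sigma> f;
          IsType \<Gamma> U \<in> J \<phi> \<Sigma> \<rbrakk> \<Longrightarrow> inductive_sig \<phi> (insert (FDecl \<Gamma> f is U) \<Sigma>)"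

end

theory Submission
  imports Defs
begin

definition ctxwf :: "('v,'f,'t) pctx \<Rightarrow> bool" where
 "ctxwf G \<longleftrightarrow> distinct (OV G) \<and> (\<forall>k<length G. varsT (snd (G!k)) \<subseteq> set (take k (OV G)))"

fun jinv :: "('v,'f,'t) judgement \<Rightarrow> bool" where
  "jinv (IsCtx G) = ctxwf G"
| "jinv (IsType G A) = (varsT A \<subseteq> VC G)"
| "jinv (HasType G a A) = (varsE a \<subseteq> VC G)"

lemma Jgen_mono: "j \<in> Jgen s \<phi> \<Sigma> \<Longrightarrow> \<Sigma> \<subseteq> \<Sigma>' \<Longrightarrow> j \<in> Jgen s \<phi> \<Sigma>'"
proof (induction rule: Jgen.induct)
  case R1 show ?case by (rule Jgen.R1)
next
  case (R2 \<Gamma> A x) then show ?case by (blast intro: Jgen.R2)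
next
  case (R3 \<Gamma> i) then show ?case by (blast intro: Jgen.R3)
next
  case (R4 \<Gamma> S js \<Delta> as) then show ?case by (intro Jgen.R4[of \<Gamma> S js]) auto
next
  case (R5 \<Gamma> f js U \<Delta> as) then show ?case by (intro Jgen.R5[of \<Gamma> f js U]) auto
qed

lemma vars_select:
  assumes "set js \<subseteq> {1..length as}" "\<forall>k<length as. varsE (as!k) \<subseteq> X"
  shows "(\<Union>t\<in>set (select as js). varsE t) \<subseteq> X"
proof -
  { fix i assume "i \<in> set js"
    then have "i - 1 < length as" using assms(1) by force
    then have "varsE (as!(i-1)) \<subseteq> X" using assms(2) by blast }
  then show ?thesis by (auto simp: select_def)
qed

lemma Jgen_inv:
  assumes fp: "fresh_provider \<phi> fr" and pd: "\<forall>d\<in>\<Sigma>. predecl \<phi> d"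
  shows "j \<in> Jgen s \<phi> \<Sigma> \<Longrightarrow> jinv j"
proof (induction rule: Jgen.induct)
  case R1 then show ?case by (simp add: ctxwf_def OV_def)
next
  case (R2 G A x)
  have fin: "finite (VC G)" by (simp add: VC_def)
  have "\<phi> (VC G) \<subseteq> - VC G" using fp fin unfolding fresh_provider_def by simp
  then have xn: "x \<notin> set (OV G)" using \<open>x \<in> \<phi> (VC G)\<close> unfolding VC_def by blast
  have wf: "ctxwf G" using R2 by simp
  have vA: "varsT A \<subseteq> set (OV G)" using R2 by (simp add: VC_def)
  have ov: "OV (G @ [(x, A)]) = OV G @ [x]" by (simp add: OV_def)
  have lo: "length (OV G) = length G" by (simp add: OV_def)
  have "\<forall>k<length (G @ [(x, A)]). varsT (snd ((G @ [(x, A)])!k)) \<subseteq> set (take k (OV G @ [x]))"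
  proof (intro allI impI)
    fix k assume k: "k < length (G @ [(x, A)])"
    show "varsT (snd ((G @ [(x, A)])!k)) \<subseteq> set (take k (OV G @ [x]))"
    proof (cases "k < length G")
      case True
      then show ?thesis using wf lo by (simp add: nth_append ctxwf_def)
    next
      case False
      then have "k = length G" using k by simp
      then show ?thesis using vA lo by simp
    qed
  qed
  moreover have "distinct (OV G @ [x])" using wf xn by (simp add: ctxwf_def)
  ultimately show ?case unfolding jinv.simps ctxwf_def ov by blast
next
  case (R3 G i) then show ?case by (simp add: VC_def OV_def)
next
  case (R4 G S js D as)
  have "determining G js" using pd R4(1) by fastforce
  then have "set js \<subseteq> {1..length as}" using \<open>length as = length G\<close> by (simp add: determining_def)
  moreover have "\<forall>k<length as. varsE (as!k) \<subseteq> VC D" using R4 by auto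
  ultimately show ?case by (simp add: vars_select)
next
  case (R5 G f js U D as)
  have "determining G js" using pd R5(1) by fastforce
  then have "set js \<subseteq> {1..length as}" using \<open>length as = length G\<close> by (simp add: determining_def)
  moreover have "\<forall>k<length as. varsE (as!k) \<subseteq> VC D" using R5 by auto
  ultimately show ?case by (simp add: vars_select)
qed

lemma substE_cong: "(\<forall>y\<in>varsE t. \<sigma> y = \<tau> y) \<Longrightarrow> substE \<sigma> t = substE \<tau> t"
  by (induction t) auto

lemma substT_cong: "(\<forall>y\<in>varsT A. \<sigma> y = \<tau> y) \<Longrightarrow> substT \<sigma> A = substT \<tau> A"
  by (cases A) (auto intro: substE_cong)

lemma substE_comp: "substE \<sigma> (substE \<tau> t) = substE (\<lambda>y. substE \<sigma> (\<tau> y)) t"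
  by (induction t) auto

lemma substT_comp: "substT \<sigma> (substT \<tau> A) = substT (\<lambda>y. substE \<sigma> (\<tau> y)) A"
  by (cases A) (auto simp: substE_comp)

lemma sub_map:
  assumes "length bs = length xs" "y \<in> set xs"
  shows "substE \<sigma> (sub bs xs y) = sub (map (substE \<sigma>) bs) xs y"
proof -
  have "map_of (zip xs bs) y \<noteq> None" using assms by (simp add: map_of_zip_is_None)
  then obtain b where b: "map_of (zip xs bs) y = Some b" by auto
  have "zip xs (map (substE \<sigma>) bs) = map (\<lambda>(k, v). (k, substE \<sigma> v)) (zip xs bs)"
    by (simp add: zip_map2)
  then have "map_of (zip xs (map (substE \<sigma>) bs)) y = Some (substE \<sigma> b)"
    by (simp add: map_of_map b)
  then show ?thesis using b by (simp add: sub_def)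
qed

lemma substT_sub_comp:
  assumes "length bs = length xs" "varsT A \<subseteq> set xs"
  shows "substT \<sigma> (substT (sub bs xs) A) = substT (sub (map (substE \<sigma>) bs) xs) A"
  unfolding substT_comp using assms by (auto intro!: substT_cong sub_map)

lemma sub_nth:
  assumes "distinct xs" "i < length xs" "length as = length xs"
  shows "sub as xs (xs!i) = as!i"
  using assms by (simp add: sub_def map_of_zip_nth)

lemma sub_take:
  assumes "y \<in> set (take i xs)" "length as = length xs"
  shows "sub as xs y = sub (take i as) (take i xs) y"
proof -
  let ?l = "zip xs as"
  have tz: "zip (take i xs) (take i as) = take i ?l" by (simp add: take_zip)
  have "y \<in> fst ` set (take i ?l)" using assms
    by (metis length_take map_fst_zip set_map tz)
  then obtain v where v: "map_of (take i ?l) y = Some v"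
    by (metis map_of_eq_None_iff option.exhaust)
  have "map_of (take i ?l @ drop i ?l) y = Some v"
    unfolding map_of_append using v by (rule map_add_find_right)
  then have "map_of ?l y = Some v" by simp
  then show ?thesis using v tz by (simp add: sub_def)
qed

definition cmap where
  "cmap \<phi> \<Sigma> D as G \<longleftrightarrow> IsCtx D \<in> J \<phi> \<Sigma> \<and> IsCtx G \<in> J \<phi> \<Sigma> \<and> length as = length G \<and>
     (\<forall>k<length G. HasType D (as!k) (substT (sub (take k as) (take k (OV G))) (snd (G!k))) \<in> J \<phi> \<Sigma>)"

fun sinv where
  "sinv \<phi> \<Sigma> (IsCtx G) = True"
| "sinv \<phi> \<Sigma> (IsType G A) = (\<forall>D as. cmap \<phi> \<Sigma> D as G \<longrightarrow> IsType D (substT (sub as (OV G)) A) \<in> J \<phi> \<Sigma>)"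
| "sinv \<phi> \<Sigma> (HasType G a A) = (\<forall>D as. cmap \<phi> \<Sigma> D as G \<longrightarrow>
      HasType D (substE (sub as (OV G)) a) (substT (sub as (OV G)) A) \<in> J \<phi> \<Sigma>)"

lemma map_select:
  assumes "set js \<subseteq> {1..length b}"
  shows "map f (select b js) = select (map f b) js"
  using assms by (force simp: select_def)

lemma Jgen_subst:
  assumes fp: "fresh_provider \<phi> fr" and pd: "\<forall>d\<in>\<Sigma>. predecl \<phi> d"
  shows "j \<in> Jgen True \<phi> \<Sigma> \<Longrightarrow> sinv \<phi> \<Sigma> j"
proof (induction rule: Jgen.induct)
  case R1 then show ?case by simp
next
  case (R2 G A x) then show ?case by simp
next
  case (R3 G i)
  have wf: "ctxwf G" using Jgen_inv[OF fp pd R3(1)] by simp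
  show ?case
  proof (intro sinv.simps(3)[THEN iffD2] allI impI)
    fix D as assume cm: "cmap \<phi> \<Sigma> D as G"
    have len: "length as = length (OV G)" using cm by (simp add: cmap_def OV_def)
    have d: "distinct (OV G)" and vi: "varsT (snd (G!i)) \<subseteq> set (take i (OV G))"
      using wf R3(2) by (auto simp: ctxwf_def)
    have "fst (G!i) = OV G ! i" using R3(2) by (simp add: OV_def)
    then have e1: "sub as (OV G) (fst (G!i)) = as!i" using sub_nth[OF d _ len] R3(2)
      by (simp add: OV_def)
    have e2: "substT (sub as (OV G)) (snd (G!i)) = substT (sub (take i as) (take i (OV G))) (snd (G!i))"
      using vi len by (auto intro!: substT_cong sub_take)
    show "HasType D (substE (sub as (OV G)) (Var (fst (G ! i)))) (substT (sub as (OV G)) (snd (G ! i))) \<in> J \<phi> \<Sigma>"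
      using cm R3(2) unfolding e2 by (simp add: e1 cmap_def)
  qed
next
  case (R4 Th S js G b)
  have wf: "ctxwf Th" using Jgen_inv[OF fp pd \<open>IsCtx Th \<in> Jgen True \<phi> \<Sigma>\<close>] by simp
  have det: "determining Th js" using pd R4(1) by fastforce
  show ?case
  proof (intro sinv.simps(2)[THEN iffD2] allI impI)
    fix D as assume cm: "cmap \<phi> \<Sigma> D as G"
    let ?\<sigma> = "sub as (OV G)"
    let ?b = "map (substE ?\<sigma>) b"
    have "IsType D (Ty S (select ?b js)) \<in> Jgen True \<phi> \<Sigma>"
    proof (rule Jgen.R4[OF R4(1)])
      show "IsCtx D \<in> Jgen True \<phi> \<Sigma>" using cm by (simp add: cmap_def J_def)
      show "IsCtx Th \<in> Jgen True \<phi> \<Sigma>" by fact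
      show "length ?b = length Th" using R4 by simp
      show "\<forall>k<length Th. HasType D (?b ! k) (substT (sub (take k ?b) (take k (OV Th))) (snd (Th ! k))) \<in> Jgen True \<phi> \<Sigma>"
      proof (intro allI impI)
        fix k assume k: "k < length Th"
        have h: "HasType D (substE ?\<sigma> (b!k)) (substT ?\<sigma> (substT (sub (take k b) (take k (OV Th))) (snd (Th ! k)))) \<in> J \<phi> \<Sigma>"
        proof -
          have "sinv \<phi> \<Sigma> (HasType G (b!k) (substT (sub (take k b) (take k (OV Th))) (snd (Th ! k))))"
            using R4.IH(3) k by blast
          then show ?thesis using cm by simp
        qed
        have "substT ?\<sigma> (substT (sub (take k b) (take k (OV Th))) (snd (Th ! k)))
            = substT (sub (map (substE ?\<sigma>) (take k b)) (take k (OV Th))) (snd (Th ! k))"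
          using wf k \<open>length b = length Th\<close> by (intro substT_sub_comp) (auto simp: ctxwf_def OV_def)
        then show "HasType D (?b ! k) (substT (sub (take k ?b) (take k (OV Th))) (snd (Th ! k))) \<in> Jgen True \<phi> \<Sigma>"
          using h k \<open>length b = length Th\<close> by (simp add: take_map J_def)
      qed
    qed
    moreover have "map (substE ?\<sigma>) (select b js) = select ?b js"
      using det \<open>length b = length Th\<close> by (intro map_select) (simp add: determining_def)
    ultimately show "IsType D (substT ?\<sigma> (Ty S (select b js))) \<in> J \<phi> \<Sigma>"
      by (simp add: J_def)
  qed
next
  case (R5 Th f js U G b)
  have wf: "ctxwf Th" using Jgen_inv[OF fp pd \<open>IsCtx Th \<in> Jgen True \<phi> \<Sigma>\<close>] by simp
  have pdf: "determining Th js" "varsT U \<subseteq> VC Th" using pd R5(1) by fastforce+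
  show ?case
  proof (intro sinv.simps(3)[THEN iffD2] allI impI)
    fix D as assume cm: "cmap \<phi> \<Sigma> D as G"
    let ?\<sigma> = "sub as (OV G)"
    let ?b = "map (substE ?\<sigma>) b"
    have eU: "substT ?\<sigma> (substCtxT U b Th) = substCtxT U ?b Th"
      unfolding substCtxT_def using \<open>length b = length Th\<close> pdf(2)
      by (intro substT_sub_comp) (auto simp: OV_def VC_def)
    have "HasType D (App f (select ?b js)) (substCtxT U ?b Th) \<in> Jgen True \<phi> \<Sigma>"
    proof (rule Jgen.R5[OF R5(1)])
      show "IsCtx D \<in> Jgen True \<phi> \<Sigma>" using cm by (simp add: cmap_def J_def)
      show "IsCtx Th \<in> Jgen True \<phi> \<Sigma>" by fact
      show "length ?b = length Th" using R5 by simp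
      show "\<forall>k<length Th. HasType D (?b ! k) (substT (sub (take k ?b) (take k (OV Th))) (snd (Th ! k))) \<in> Jgen True \<phi> \<Sigma>"
      proof (intro allI impI)
        fix k assume k: "k < length Th"
        have h: "HasType D (substE ?\<sigma> (b!k)) (substT ?\<sigma> (substT (sub (take k b) (take k (OV Th))) (snd (Th ! k)))) \<in> J \<phi> \<Sigma>"
        proof -
          have "sinv \<phi> \<Sigma> (HasType G (b!k) (substT (sub (take k b) (take k (OV Th))) (snd (Th ! k))))"
            using R5.IH(3) k by blast
          then show ?thesis using cm by simp
        qed
        have "substT ?\<sigma> (substT (sub (take k b) (take k (OV Th))) (snd (Th ! k)))
            = substT (sub (map (substE ?\<sigma>) (take k b)) (take k (OV Th))) (snd (Th ! k))"
          using wf k \<open>length b = length Th\<close> by (intro substT_sub_comp) (auto simp: ctxwf_def OV_def)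
        then show "HasType D (?b ! k) (substT (sub (take k ?b) (take k (OV Th))) (snd (Th ! k))) \<in> Jgen True \<phi> \<Sigma>"
          using h k \<open>length b = length Th\<close> by (simp add: take_map J_def)
      qed
      show "True \<longrightarrow> IsType D (substCtxT U ?b Th) \<in> Jgen True \<phi> \<Sigma>"
        proof -
          have "sinv \<phi> \<Sigma> (IsType G (substCtxT U b Th))" using R5.IH(4) by simp
          then have "IsType D (substT (sub as (OV G)) (substCtxT U b Th)) \<in> J \<phi> \<Sigma>" using cm by simp
          then show ?thesis using eU by (simp add: J_def)
        qed
    qed
    moreover have "map (substE ?\<sigma>) (select b js) = select ?b js"
      using pdf(1) \<open>length b = length Th\<close> by (intro map_select) (simp add: determining_def)
    ultimately show "HasType D (substE ?\<sigma> (App f (select b js))) (substT ?\<sigma> (substCtxT U b Th)) \<in> J \<phi> \<Sigma>"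
      by (simp add: J_def eU)
  qed
qed

lemma sig_props:
  "inductive_sig \<phi> \<Sigma> \<Longrightarrow> (\<forall>d\<in>\<Sigma>. predecl \<phi> d) \<and> (\<forall>G f js U. FDecl G f js U \<in> \<Sigma> \<longrightarrow> IsType G U \<in> J \<phi> \<Sigma>)"
proof (induction rule: inductive_sig.induct)
  case empty then show ?case by simp
next
  case (addT \<Sigma> G S js)
  have mono: "\<And>j. j \<in> Jgen True \<phi> \<Sigma> \<Longrightarrow> j \<in> Jgen True \<phi> (insert (TDecl G S js) \<Sigma>)"
    by (erule Jgen_mono) auto
  from addT show ?case unfolding J_def by (auto intro: mono)
next
  case (addF \<Sigma> G f js U)
  have mono: "\<And>j. j \<in> Jgen True \<phi> \<Sigma> \<Longrightarrow> j \<in> Jgen True \<phi> (insert (FDecl G f js U) \<Sigma>)"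
    by (erule Jgen_mono) auto
  from addF show ?case unfolding J_def by (auto intro: mono)
qed

lemma J_sub_Jstar: "j \<in> Jgen True \<phi> \<Sigma> \<Longrightarrow> j \<in> Jgen False \<phi> \<Sigma>"
proof (induction rule: Jgen.induct)
  case R1 show ?case by (rule Jgen.R1)
next
  case (R2 \<Gamma> A x) then show ?case by (blast intro: Jgen.R2)
next
  case (R3 \<Gamma> i) then show ?case by (blast intro: Jgen.R3)
next
  case (R4 \<Gamma> S js \<Delta> as) then show ?case by (intro Jgen.R4[of \<Gamma> S js]) auto
next
  case (R5 \<Gamma> f js U \<Delta> as) then show ?case by (intro Jgen.R5[of \<Gamma> f js U]) auto
qed

lemma Jstar_sub_J:
  assumes fp: "fresh_provider \<phi> fr" and pd: "\<forall>d\<in>\<Sigma>. predecl \<phi> d"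
    and fd: "\<forall>G f js U. FDecl G f js U \<in> \<Sigma> \<longrightarrow> IsType G U \<in> J \<phi> \<Sigma>"
  shows "j \<in> Jgen False \<phi> \<Sigma> \<Longrightarrow> j \<in> Jgen True \<phi> \<Sigma>"
proof (induction rule: Jgen.induct)
  case R1 show ?case by (rule Jgen.R1)
next
  case (R2 \<Gamma> A x) then show ?case by (blast intro: Jgen.R2)
next
  case (R3 \<Gamma> i) then show ?case by (blast intro: Jgen.R3)
next
  case (R4 \<Gamma> S js \<Delta> as) then show ?case by (intro Jgen.R4[of \<Gamma> S js]) auto
next
  case (R5 G f js U D as)
  have cm: "cmap \<phi> \<Sigma> D as G" using R5 by (auto simp: cmap_def J_def)
  have "IsType G U \<in> Jgen True \<phi> \<Sigma>" using fd R5(1) by (simp add: J_def)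
  then have "sinv \<phi> \<Sigma> (IsType G U)" by (rule Jgen_subst[OF fp pd])
  then have "IsType D (substCtxT U as G) \<in> Jgen True \<phi> \<Sigma>"
    using cm by (simp add: substCtxT_def J_def)
  then show ?case using R5 by (intro Jgen.R5[of G f js U]) auto
qed

theorem mainTheorem7:
  fixes \<phi> :: "'v set \<Rightarrow> 'v set" and fr :: "'v set \<Rightarrow> 'v"
    and \<Sigma> :: "('v,'f,'t) decl set"
  assumes "infinite (UNIV :: 'v set)"
    and "fresh_provider \<phi> fr"
    and "inductive_sig \<phi> \<Sigma>"
    and "finite \<Sigma>"
  shows "J \<phi> \<Sigma> = Jstar \<phi> \<Sigma>"
proof -
  note sp = sig_props[OF assms(3)]
  show ?thesis unfolding J_def Jstar_def
    using J_sub_Jstar Jstar_sub_J[OF assms(2)] sp by (auto simp: J_def)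
qed

end
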